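(* Let $A$ be an $F_n$-good $n\times n$ matrix. Then: (1) Any entry $1$ in column $1$ of $A$ lies in row $1$ or row $n$; similarly any entry $1$ in column $n$ lies in row $1$ or row $n$. (2) Each of the rows $A_2,A_3,\ldots,A_{n-1}$ is a standard basis vector $\vec{e}_j$ (a row of the identity matrix $I_n$), and these $n-2$ rows are pairwise distinct. (3) Each of the rows $A_1$ and $A_n$ contains either one or two entries equal to $1$. (4) Row $A_1$ has an entry $1$ in column $1$ or in column $n$, and the same holds for row $A_n$. If $A_1$ (resp. $A_n$) has a second entry equal to $1$, it lies in column $3$ or column $n-2$.
   Context: $F_n$ is the set of vectors $\vec{x}=(x_1,\ldots,x_n)\in\mathbb{Z}_2^n$ with no $i$ such that $x_i=x_{i+1}=1$. An $n\times n$ matrix $A$ over $\mathbb{Z}_2$ is $F_n$-good if it is invertible and $A\vec{x}\in F_n$ for all $\vec{x}\in F_n$. $A_i$ denotes the $i$-th row of $A$, $A_{i,j}$ its $(i,j)$ entry, and $\vec{e}_j$ the $j$-th standard basis vector of $\mathbb{Z}_2^n$. *)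

theory Defs
  imports Main "HOL-Library.Z2"
begin

text \<open>Vectors in Z_2^n are functions nat => bit, indices 1..n, zero outside.
  n x n matrices over Z_2 are functions nat => nat => bit; only entries with
  indices in 1..n are meaningful.\<close>

definition Fn :: "nat \<Rightarrow> (nat \<Rightarrow> bit) set" where
  "Fn n = {x. (\<forall>i. i \<notin> {1..n} \<longrightarrow> x i = 0) \<and>
              (\<forall>i\<in>{1..<n}. \<not> (x i = 1 \<and> x (Suc i) = 1))}"

definition mat_vec :: "nat \<Rightarrow> (nat \<Rightarrow> nat \<Rightarrow> bit) \<Rightarrow> (nat \<Rightarrow> bit) \<Rightarrow> (nat \<Rightarrow> bit)" where
  "mat_vec n A x = (\<lambda>i. if i \<in> {1..n} then (\<Sum>j=1..n. A i j * x j) else 0)"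

definition mat_invertible :: "nat \<Rightarrow> (nat \<Rightarrow> nat \<Rightarrow> bit) \<Rightarrow> bool" where
  "mat_invertible n A \<longleftrightarrow> (\<exists>B. \<forall>i\<in>{1..n}. \<forall>k\<in>{1..n}.
      (\<Sum>j=1..n. A i j * B j k) = (if i = k then 1 else 0) \<and>
      (\<Sum>j=1..n. B i j * A j k) = (if i = k then 1 else 0))"

definition Fn_good :: "nat \<Rightarrow> (nat \<Rightarrow> nat \<Rightarrow> bit) \<Rightarrow> bool" where
  "Fn_good n A \<longleftrightarrow> mat_invertible n A \<and> (\<forall>x\<in>Fn n. mat_vec n A x \<in> Fn n)"

definition mat_row :: "nat \<Rightarrow> (nat \<Rightarrow> nat \<Rightarrow> bit) \<Rightarrow> nat \<Rightarrow> (nat \<Rightarrow> bit)" where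
  "mat_row n A i = (\<lambda>k. if k \<in> {1..n} then A i k else 0)"

definition std_basis :: "nat \<Rightarrow> nat \<Rightarrow> (nat \<Rightarrow> bit)" where
  "std_basis n j = (\<lambda>k. if k \<in> {1..n} \<and> k = j then 1 else 0)"

end

theory Submission imports Defs begin

definition vec :: "nat set \<Rightarrow> nat \<Rightarrow> bit" where
  "vec S = (\<lambda>k. if k \<in> S then 1 else 0)"

lemma mv1: assumes "a \<in> {1..n}" "i \<in> {1..n}"
  shows "mat_vec n A (vec {a}) i = A i a"
proof -
  have "(\<Sum>j=1..n. A i j * vec {a} j) = (\<Sum>j\<in>{1..n}. if j = a then A i j else 0)"
    by (rule sum.cong) (auto simp: vec_def)
  also have "\<dots> = A i a" using assms(1) by (simp add: sum.delta)
  finally show ?thesis using assms(2) by (simp add: mat_vec_def)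
qed

lemma mv2: assumes "a \<in> {1..n}" "b \<in> {1..n}" "a \<noteq> b" "i \<in> {1..n}"
  shows "mat_vec n A (vec {a,b}) i = A i a + A i b"
proof -
  have "(\<Sum>j=1..n. A i j * vec {a,b} j) = (\<Sum>j\<in>{1..n}. if j \<in> {a,b} then A i j else 0)"
    by (rule sum.cong) (auto simp: vec_def)
  also have "\<dots> = sum (A i) ({1..n} \<inter> {a,b})" by (simp add: sum.inter_restrict)
  also have "{1..n} \<inter> {a,b} = {a,b}" using assms by auto
  also have "sum (A i) {a,b} = A i a + A i b" using assms(3) by simp
  finally show ?thesis using assms(4) by (simp add: mat_vec_def)
qed

lemma vec1_Fn: "a \<in> {1..n} \<Longrightarrow> vec {a} \<in> Fn n"
  by (auto simp: Fn_def vec_def)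

lemma vec2_Fn: "a \<in> {1..n} \<Longrightarrow> b \<in> {1..n} \<Longrightarrow> a \<noteq> b \<Longrightarrow> a \<noteq> Suc b \<Longrightarrow> b \<noteq> Suc a \<Longrightarrow> vec {a,b} \<in> Fn n"
  by (auto simp: Fn_def vec_def)

lemma good_pair:
  assumes g: "Fn_good n A" and i: "i \<in> {1..<n}" and ab: "a\<in>{1..n}" "b\<in>{1..n}"
    and h: "A i a = 1" "A (Suc i) b = 1"
  shows "b = Suc a \<or> a = Suc b"
proof -
  have i1: "i \<in> {1..n}" "Suc i \<in> {1..n}" using i by auto
  have L1: "\<not> (A i c = 1 \<and> A (Suc i) c = 1)" if c: "c \<in> {1..n}" for c
  proof -
    have "mat_vec n A (vec {c}) \<in> Fn n" using g vec1_Fn[OF c] by (auto simp: Fn_good_def)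
    then have "\<not> (mat_vec n A (vec {c}) i = 1 \<and> mat_vec n A (vec {c}) (Suc i) = 1)"
      using i by (auto simp: Fn_def)
    then show ?thesis using mv1[OF c i1(1)] mv1[OF c i1(2)] by simp
  qed
  show ?thesis
  proof (rule ccontr)
    assume na: "\<not> ?thesis"
    have ne: "a \<noteq> b" using L1[OF ab(1)] h by auto
    have z: "A (Suc i) a = 0" "A i b = 0" using L1[OF ab(1)] L1[OF ab(2)] h by auto
    have "mat_vec n A (vec {a,b}) \<in> Fn n" using g vec2_Fn[OF ab ne] na by (auto simp: Fn_good_def)
    then have "\<not> (mat_vec n A (vec {a,b}) i = 1 \<and> mat_vec n A (vec {a,b}) (Suc i) = 1)"
      using i by (auto simp: Fn_def)
    then show False using mv2[OF ab ne i1(1)] mv2[OF ab ne i1(2)] h z by simp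
  qed
qed

lemma good_adj:
  assumes g: "Fn_good n A" and ik: "i \<in> {1..n}" "k \<in> {1..n}" "k = Suc i \<or> i = Suc k"
    and ab: "a\<in>{1..n}" "b\<in>{1..n}" and h: "A i a = 1" "A k b = 1"
  shows "b = Suc a \<or> a = Suc b"
  using ik(3)
proof
  assume "k = Suc i" then show ?thesis using good_pair[OF g _ ab h(1)] h(2) ik by auto
next
  assume "i = Suc k" then show ?thesis using good_pair[OF g _ ab(2,1) h(2)] h(1) ik by auto
qed

lemma inv_row:
  assumes "mat_invertible n A" "i \<in> {1..n}"
  shows "\<exists>j\<in>{1..n}. A i j = 1"
proof (rule ccontr)
  assume "\<not> ?thesis"
  then have z: "\<forall>j\<in>{1..n}. A i j = 0" by auto
  obtain B where B: "\<forall>i\<in>{1..n}. \<forall>k\<in>{1..n}.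
      (\<Sum>j=1..n. A i j * B j k) = (if i = k then 1 else 0) \<and>
      (\<Sum>j=1..n. B i j * A j k) = (if i = k then 1 else 0)"
    using assms(1) by (auto simp: mat_invertible_def)
  have "(\<Sum>j=1..n. A i j * B j i) = 1" using B assms(2) by auto
  moreover have "(\<Sum>j=1..n. A i j * B j i) = 0" using z by (simp add: sum.neutral)
  ultimately show False by simp
qed

lemma inv_col:
  assumes "mat_invertible n A" "j \<in> {1..n}"
  shows "\<exists>i\<in>{1..n}. A i j = 1"
proof (rule ccontr)
  assume "\<not> ?thesis"
  then have z: "\<forall>i\<in>{1..n}. A i j = 0" by auto
  obtain B where B: "\<forall>i\<in>{1..n}. \<forall>k\<in>{1..n}.
      (\<Sum>j=1..n. A i j * B j k) = (if i = k then 1 else 0) \<and>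
      (\<Sum>j=1..n. B i j * A j k) = (if i = k then 1 else 0)"
    using assms(1) by (auto simp: mat_invertible_def)
  have "(\<Sum>i=1..n. B j i * A i j) = 1" using B assms(2) by auto
  moreover have "(\<Sum>i=1..n. B j i * A i j) = 0" using z by (simp add: sum.neutral)
  ultimately show False by simp
qed

lemma inv_rows_distinct:
  assumes "mat_invertible n A" "i \<in> {1..n}" "k \<in> {1..n}" "\<forall>j\<in>{1..n}. A i j = A k j"
  shows "i = k"
proof -
  obtain B where B: "\<forall>i\<in>{1..n}. \<forall>k\<in>{1..n}.
      (\<Sum>j=1..n. A i j * B j k) = (if i = k then 1 else 0) \<and>
      (\<Sum>j=1..n. B i j * A j k) = (if i = k then 1 else 0)"
    using assms(1) by (auto simp: mat_invertible_def)
  have "(\<Sum>j=1..n. A i j * B j i) = (\<Sum>j=1..n. A k j * B j i)"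
    using assms(4) by (intro sum.cong) auto
  then have "(1::bit) = (if k = i then 1 else 0)" using B assms(2,3) by simp
  then show ?thesis by (cases "k = i") auto
qed

lemma mid_rows_eq:
  assumes g: "Fn_good n A" and i: "i \<in> {2..n-1}"
    and c1: "\<forall>j\<in>{1..n}. A (i-1) j = 1 \<longrightarrow> j = c" and c2: "\<forall>j\<in>{1..n}. A (Suc i) j = 1 \<longrightarrow> j = c"
  shows False
proof -
  have inv: "mat_invertible n A" using g by (simp add: Fn_good_def)
  have r: "i - 1 \<in> {1..n}" "Suc i \<in> {1..n}" using i by auto
  obtain b1 where b1: "b1 \<in> {1..n}" "A (i-1) b1 = 1" using inv_row[OF inv r(1)] by blast
  obtain b2 where b2: "b2 \<in> {1..n}" "A (Suc i) b2 = 1" using inv_row[OF inv r(2)] by blast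
  have "b1 = c" "b2 = c" using b1 b2 c1 c2 by auto
  have "\<forall>j\<in>{1..n}. A (i-1) j = A (Suc i) j"
  proof
    fix j assume j: "j \<in> {1..n}"
    show "A (i-1) j = A (Suc i) j"
    proof (cases "j = c")
      case True then show ?thesis using b1 b2 \<open>b1 = c\<close> \<open>b2 = c\<close> by simp
    next
      case False then show ?thesis using c1 c2 j by (metis bit_not_one_iff)
    qed
  qed
  then have "i - 1 = Suc i" using inv_rows_distinct[OF inv r] by blast
  then show False by simp
qed

theorem corollary1:
  fixes n :: nat and A :: "nat \<Rightarrow> nat \<Rightarrow> bit"
  assumes "n \<ge> 1" and "Fn_good n A"
  shows "(\<forall>i\<in>{1..n}. A i 1 = 1 \<longrightarrow> i = 1 \<or> i = n) \<and>
         (\<forall>i\<in>{1..n}. A i n = 1 \<longrightarrow> i = 1 \<or> i = n) \<and>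
         (\<forall>i\<in>{2..n-1}. \<exists>j\<in>{1..n}. mat_row n A i = std_basis n j) \<and>
         inj_on (mat_row n A) {2..n-1} \<and>
         (\<forall>r\<in>{1, n}. card {j\<in>{1..n}. A r j = 1} \<in> {1, 2}) \<and>
         (\<forall>r\<in>{1, n}. \<exists>c\<in>{1, n}. A r c = 1 \<and>
            (\<forall>j\<in>{1..n}. j \<noteq> c \<and> A r j = 1 \<longrightarrow> j = 3 \<or> j = n - 2))"
proof -
  note g = assms(2)
  have inv: "mat_invertible n A" using g by (simp add: Fn_good_def)
  have adj: "b = Suc a \<or> a = Suc b"
    if "i \<in> {1..n}" "k \<in> {1..n}" "k = Suc i \<or> i = Suc k" "a\<in>{1..n}" "b\<in>{1..n}" "A i a = 1" "A k b = 1"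
    for i k a b using good_adj[OF g that] .
  have S: "a = a'" if i: "i \<in> {2..n-1}" and a: "a \<in> {1..n}" "a' \<in> {1..n}" "A i a = 1" "A i a' = 1" for i a a'
  proof (rule ccontr)
    assume ne: "a \<noteq> a'"
    have r: "i - 1 \<in> {1..n}" "Suc i \<in> {1..n}" "i \<in> {1..n}" using i by auto
    obtain b where b: "b \<in> {1..n}" "A (i-1) b = 1" using inv_row[OF inv r(1)] by blast
    have ab: "b = Suc a \<or> a = Suc b" "b = Suc a' \<or> a' = Suc b"
      using adj[OF r(3) r(1) _ a(1) b(1) a(3) b(2)] adj[OF r(3) r(1) _ a(2) b(1) a(4) b(2)] i by auto
    have c1: "\<forall>j\<in>{1..n}. A (i-1) j = 1 \<longrightarrow> j = b"
    proof (intro ballI impI)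
      fix j assume j: "j \<in> {1..n}" "A (i-1) j = 1"
      have "j = Suc a \<or> a = Suc j" "j = Suc a' \<or> a' = Suc j"
        using adj[OF r(3) r(1) _ a(1) j(1) a(3) j(2)] adj[OF r(3) r(1) _ a(2) j(1) a(4) j(2)] i by auto
      then show "j = b" using ab ne by auto
    qed
    have c2: "\<forall>j\<in>{1..n}. A (Suc i) j = 1 \<longrightarrow> j = b"
    proof (intro ballI impI)
      fix j assume j: "j \<in> {1..n}" "A (Suc i) j = 1"
      have "j = Suc a \<or> a = Suc j" "j = Suc a' \<or> a' = Suc j"
        using adj[OF r(3) r(2) _ a(1) j(1) a(3) j(2)] adj[OF r(3) r(2) _ a(2) j(1) a(4) j(2)] by auto
      then show "j = b" using ab ne by auto
    qed
    show False using mid_rows_eq[OF g i c1 c2] .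
  qed
  have E: False if i: "i \<in> {2..n-1}" and c: "c = 1 \<or> c = n" and h: "A i c = 1" for i c
  proof -
    have r: "i - 1 \<in> {1..n}" "Suc i \<in> {1..n}" "i \<in> {1..n}" "c \<in> {1..n}" using i c assms(1) by auto
    define d where "d = (if c = 1 then 2 else n - 1)"
    have c1: "\<forall>j\<in>{1..n}. A (i-1) j = 1 \<longrightarrow> j = d"
    proof (intro ballI impI)
      fix j assume j: "j \<in> {1..n}" "A (i-1) j = 1"
      have "j = Suc c \<or> c = Suc j" using adj[OF r(3) r(1) _ r(4) j(1) h j(2)] i by auto
      then show "j = d" using c j(1) i unfolding d_def by auto
    qed
    have c2: "\<forall>j\<in>{1..n}. A (Suc i) j = 1 \<longrightarrow> j = d"
    proof (intro ballI impI)
      fix j assume j: "j \<in> {1..n}" "A (Suc i) j = 1"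
      have "j = Suc c \<or> c = Suc j" using adj[OF r(3) r(2) _ r(4) j(1) h j(2)] by auto
      then show "j = d" using c j(1) i unfolding d_def by auto
    qed
    show False using mid_rows_eq[OF g i c1 c2] .
  qed
  have P1: "\<forall>i\<in>{1..n}. A i 1 = 1 \<longrightarrow> i = 1 \<or> i = n"
  proof (intro ballI impI)
    fix i assume i: "i \<in> {1..n}" and h: "A i 1 = 1"
    show "i = 1 \<or> i = n"
    proof (rule ccontr)
      assume "\<not> (i = 1 \<or> i = n)"
      then have "i \<in> {2..n-1}" using i by auto
      then show False using E[OF _ _ h] by simp
    qed
  qed
  have P2: "\<forall>i\<in>{1..n}. A i n = 1 \<longrightarrow> i = 1 \<or> i = n"
  proof (intro ballI impI)
    fix i assume i: "i \<in> {1..n}" and h: "A i n = 1"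
    show "i = 1 \<or> i = n"
    proof (rule ccontr)
      assume "\<not> (i = 1 \<or> i = n)"
      then have "i \<in> {2..n-1}" using i by auto
      then show False using E[OF _ _ h] by simp
    qed
  qed
  have P3: "\<forall>i\<in>{2..n-1}. \<exists>j\<in>{1..n}. mat_row n A i = std_basis n j"
  proof
    fix i assume i: "i \<in> {2..n-1}"
    then have "i \<in> {1..n}" by auto
    then obtain j where j: "j \<in> {1..n}" "A i j = 1" using inv_row[OF inv] by blast
    have "mat_row n A i = std_basis n j"
    proof
      fix k show "mat_row n A i k = std_basis n j k"
      proof (cases "k \<in> {1..n}")
        case True
        have "A i k = (if k = j then 1 else 0)"
        proof (cases "k = j")
          case True then show ?thesis using j by simp
        next
          case False
          then have "A i k \<noteq> 1" using S[OF i j(1) True j(2)] by metis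
          then show ?thesis using False by simp
        qed
        then show ?thesis using True by (simp add: mat_row_def std_basis_def)
      next
        case False then show ?thesis by (auto simp: mat_row_def std_basis_def)
      qed
    qed
    then show "\<exists>j\<in>{1..n}. mat_row n A i = std_basis n j" using j by blast
  qed
  have P4: "inj_on (mat_row n A) {2..n-1}"
  proof (rule inj_onI)
    fix i k assume ik: "i \<in> {2..n-1}" "k \<in> {2..n-1}" "mat_row n A i = mat_row n A k"
    have "\<forall>j\<in>{1..n}. A i j = A k j"
    proof
      fix j assume "j \<in> {1..n}"
      then show "A i j = A k j" using fun_cong[OF ik(3), of j] by (simp add: mat_row_def)
    qed
    then show "i = k" using inv_rows_distinct[OF inv] ik by auto
  qed
  have nb: "\<exists>s\<in>{1..n}. s = Suc r \<or> r = Suc s" if "r = 1 \<or> r = n" "n \<ge> 2" for r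
    using that by (cases "r = 1") (auto intro: bexI[of _ 2] bexI[of _ "n - 1"])
  have P5: "card {j\<in>{1..n}. A r j = 1} \<in> {1, 2}" if r: "r = 1 \<or> r = n" for r
  proof -
    have rr: "r \<in> {1..n}" using r assms(1) by auto
    obtain j0 where j0: "j0 \<in> {1..n}" "A r j0 = 1" using inv_row[OF inv rr] by blast
    have fin: "finite {j\<in>{1..n}. A r j = 1}" by simp
    have ge: "card {j\<in>{1..n}. A r j = 1} \<ge> 1"
    proof -
      have "j0 \<in> {j\<in>{1..n}. A r j = 1}" using j0 by simp
      then have "{j\<in>{1..n}. A r j = 1} \<noteq> {}" by blast
      then have "card {j\<in>{1..n}. A r j = 1} > 0" using fin card_gt_0_iff by blast
      then show ?thesis by simp
    qed
    have le: "card {j\<in>{1..n}. A r j = 1} \<le> 2"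
    proof (cases "n \<ge> 2")
      case True
      then obtain s where s: "s \<in> {1..n}" "s = Suc r \<or> r = Suc s" using nb[OF r] by blast
      obtain b where b: "b \<in> {1..n}" "A s b = 1" using inv_row[OF inv s(1)] by blast
      have "{j\<in>{1..n}. A r j = 1} \<subseteq> {b - 1, Suc b}"
      proof
        fix j assume "j \<in> {j\<in>{1..n}. A r j = 1}"
        then have j: "j \<in> {1..n}" "A r j = 1" by auto
        have "b = Suc j \<or> j = Suc b" using adj[OF rr s(1) s(2) j(1) b(1) j(2) b(2)] .
        then show "j \<in> {b - 1, Suc b}" by auto
      qed
      then have "card {j\<in>{1..n}. A r j = 1} \<le> card {b - 1, Suc b}" by (intro card_mono) auto
      also have "\<dots> \<le> 2" by (simp add: card_insert_le_m1)
      finally show ?thesis .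
    next
      case False
      then have "{j\<in>{1..n}. A r j = 1} \<subseteq> {1}" by auto
      then have "card {j\<in>{1..n}. A r j = 1} \<le> card {1::nat}" by (intro card_mono) auto
      then show ?thesis by simp
    qed
    show ?thesis using ge le by auto
  qed
  have P6b: "\<forall>j\<in>{1..n}. j \<noteq> c \<and> A r j = 1 \<longrightarrow> j = 3 \<or> j = n - 2"
    if r: "r = 1 \<or> r = n" and c: "c = 1 \<or> c = n" and h: "A r c = 1" for r c
  proof (intro ballI impI)
    fix j assume j: "j \<in> {1..n}" "j \<noteq> c \<and> A r j = 1"
    have rr: "r \<in> {1..n}" "c \<in> {1..n}" using r c assms(1) by auto
    show "j = 3 \<or> j = n - 2"
    proof (cases "n \<ge> 2")
      case True
      then obtain s where s: "s \<in> {1..n}" "s = Suc r \<or> r = Suc s" using nb[OF r] by blast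
      obtain b where b: "b \<in> {1..n}" "A s b = 1" using inv_row[OF inv s(1)] by blast
      have "b = Suc j \<or> j = Suc b" using adj[OF rr(1) s(1) s(2) j(1) b(1) _ b(2)] j by auto
      moreover have "b = Suc c \<or> c = Suc b" using adj[OF rr(1) s(1) s(2) rr(2) b(1) h b(2)] .
      ultimately show ?thesis using c j b(1) by auto
    next
      case False then show ?thesis using j c by auto
    qed
  qed
  have P6a: "A r 1 = 1 \<or> A r n = 1" if r: "r = 1 \<or> r = n" for r
  proof (rule ccontr)
    assume na: "\<not> ?thesis"
    define oo where "oo = (if r = 1 then n else 1)"
    have n1: "1 \<in> {1..n}" "n \<in> {1..n}" using assms(1) by auto
    obtain i where i: "i \<in> {1..n}" "A i 1 = 1" using inv_col[OF inv n1(1)] by blast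
    obtain i' where i': "i' \<in> {1..n}" "A i' n = 1" using inv_col[OF inv n1(2)] by blast
    have "i = 1 \<or> i = n" "i' = 1 \<or> i' = n" using P1 P2 i i' by auto
    then have io: "i = oo" "i' = oo" using na r i(2) i'(2) unfolding oo_def by auto
    have ro: "r \<noteq> oo" using na io i(2) i'(2) by auto
    then have n2: "n \<ge> 2" using r assms(1) unfolding oo_def by (auto split: if_splits)
    have o1: "oo = 1 \<or> oo = n" "oo \<in> {1..n}" using assms(1) unfolding oo_def by auto
    obtain t where t: "t \<in> {1..n}" "t = Suc oo \<or> oo = Suc t" using nb[OF o1(1) n2] by blast
    obtain b where b: "b \<in> {1..n}" "A t b = 1" using inv_row[OF inv t(1)] by blast
    have "b = Suc 1 \<or> 1 = Suc b" using adj[OF o1(2) t(1) t(2) n1(1) b(1) _ b(2)] io i by simp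
    moreover have "b = Suc n \<or> n = Suc b" using adj[OF o1(2) t(1) t(2) n1(2) b(1) _ b(2)] io i' by simp
    ultimately have bn: "b = 2" "n = 3" using b(1) by auto
    then have t2: "t = 2" using t o1 by auto
    have rr: "r \<in> {1..n}" using r assms(1) by auto
    obtain e where e: "e \<in> {1..n}" "A r e = 1" using inv_row[OF inv rr] by blast
    have "e = Suc b \<or> b = Suc e" using adj[OF t(1) rr _ b(1) e(1) b(2) e(2)] r bn t2 by auto
    then have "e = 1 \<or> e = n" using bn by auto
    then show False using na e by auto
  qed
  have P6: "\<exists>c\<in>{1, n}. A r c = 1 \<and>
            (\<forall>j\<in>{1..n}. j \<noteq> c \<and> A r j = 1 \<longrightarrow> j = 3 \<or> j = n - 2)" if r: "r = 1 \<or> r = n" for r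
  proof (cases "A r 1 = 1")
    case True then show ?thesis using P6b[OF r, of 1] by auto
  next
    case False then have "A r n = 1" using P6a[OF r] by auto
    then show ?thesis using P6b[OF r, of n] by auto
  qed
  show ?thesis using P1 P2 P3 P4 P5 P6 by auto
qed

end
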